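(* Let $n=2$ and let $I_1,I_2$ be independent Bernoulli random variables with $\Pr[I_i=1]=p_i\in(0,1)$, $q_i=1-p_i$, and set $I_3=(1-I_1)(1-I_2)$. For positive reals $\pi_1,\pi_2,\pi_3>0$ consider the Tavin scheme with active administrator, with compensations $$W_i=(\pi_1+\pi_2+\pi_3)\,\frac{\pi_iI_i}{\pi_1I_1+\pi_2I_2+\pi_3I_3},\qquad i=1,2,3.$$ Then $E[W_i]=\pi_i$ for $i=1,2,3$ if and only if $$\pi_1=\pi_3\,\frac{p_1}{q_1}\,\frac{1-q_1q_2}{p_1q_2+p_2q_1},\qquad \pi_2=\pi_3\,\frac{p_2}{q_2}\,\frac{1-q_1q_2}{p_1q_2+p_2q_1}.$$ In particular, the set of positive investment vectors making this scheme actuarially fair for all three agents is exactly the set of vectors of this form with $\pi_3>0$ arbitrary.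
   Context: Note that $\pi_1I_1+\pi_2I_2+\pi_3I_3>0$ always, since $I_3=1$ exactly when $I_1=I_2=0$. *)

theory Defs
  imports "HOL-Probability.Probability"
begin

definition tavin_dist :: "real \<Rightarrow> real \<Rightarrow> (bool \<times> bool) pmf" where
  "tavin_dist p1 p2 = pair_pmf (bernoulli_pmf p1) (bernoulli_pmf p2)"

definition tavin_I :: "nat \<Rightarrow> bool \<times> bool \<Rightarrow> real" where
  "tavin_I i \<omega> =
     (if i = 1 then of_bool (fst \<omega>)
      else if i = 2 then of_bool (snd \<omega>)
      else (1 - of_bool (fst \<omega>)) * (1 - of_bool (snd \<omega>)))"

definition tavin_pi :: "real \<times> real \<times> real \<Rightarrow> nat \<Rightarrow> real" where
  "tavin_pi \<pi> i = (if i = 1 then fst \<pi> else if i = 2 then fst (snd \<pi>) else snd (snd \<pi>))"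

definition tavin_W :: "real \<times> real \<times> real \<Rightarrow> nat \<Rightarrow> bool \<times> bool \<Rightarrow> real" where
  "tavin_W \<pi> i \<omega> =
     (tavin_pi \<pi> 1 + tavin_pi \<pi> 2 + tavin_pi \<pi> 3) * (tavin_pi \<pi> i * tavin_I i \<omega>) /
     (tavin_pi \<pi> 1 * tavin_I 1 \<omega> + tavin_pi \<pi> 2 * tavin_I 2 \<omega> + tavin_pi \<pi> 3 * tavin_I 3 \<omega>)"

definition tavin_fair :: "real \<Rightarrow> real \<Rightarrow> real \<times> real \<times> real \<Rightarrow> bool" where
  "tavin_fair p1 p2 \<pi> \<longleftrightarrow>
     (\<forall>i\<in>{1,2,3::nat}. measure_pmf.expectation (tavin_dist p1 p2) (tavin_W \<pi> i) = tavin_pi \<pi> i)"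

end

theory Submission
  imports Defs
begin

lemma exp_tavin:
  assumes "0 \<le> p1" "p1 \<le> 1" "0 \<le> p2" "p2 \<le> 1"
  shows "measure_pmf.expectation (tavin_dist p1 p2) f =
    p1*p2*f (True,True) + p1*(1-p2)*f (True,False) + (1-p1)*p2*f (False,True) + (1-p1)*(1-p2)*f (False,False)"
proof -
  have "measure_pmf.expectation (tavin_dist p1 p2) f = (\<Sum>a\<in>UNIV. f a * pmf (tavin_dist p1 p2) a)"
    by (rule integral_measure_pmf_real) auto
  also have "\<dots> = (\<Sum>a\<in>UNIV \<times> UNIV. f a * pmf (tavin_dist p1 p2) a)"
    by simp
  also have "\<dots> = p1*p2*f (True,True) + p1*(1-p2)*f (True,False) + (1-p1)*p2*f (False,True) + (1-p1)*(1-p2)*f (False,False)"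
    using assms by (simp add: UNIV_bool tavin_dist_def pmf_pair algebra_simps del: UNIV_Times_UNIV)
  finally show ?thesis .
qed

lemma fair_iff:
  assumes "0 < p1" "p1 < 1" "0 < p2" "p2 < 1" "0 < a" "0 < b" "0 < c"
  shows "tavin_fair p1 p2 (a,b,c) \<longleftrightarrow>
     ((a+b+c)*(p1*p2*(a/(a+b)) + p1*(1-p2)) = a \<and>
      (a+b+c)*(p1*p2*(b/(a+b)) + (1-p1)*p2) = b \<and>
      (1-p1)*(1-p2)*(a+b+c) = c)"
proof -
  have e: "measure_pmf.expectation (tavin_dist p1 p2) f =
    p1*p2*f (True,True) + p1*(1-p2)*f (True,False) + (1-p1)*p2*f (False,True) + (1-p1)*(1-p2)*f (False,False)" for f
    using assms by (intro exp_tavin) auto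
  have w: "tavin_W (a,b,c) 1 (True,True) = (a+b+c)*(a/(a+b))"
     "tavin_W (a,b,c) 1 (True,False) = a+b+c"
     "tavin_W (a,b,c) 1 (False,True) = 0"
     "tavin_W (a,b,c) 1 (False,False) = 0"
     "tavin_W (a,b,c) 2 (True,True) = (a+b+c)*(b/(a+b))"
     "tavin_W (a,b,c) 2 (True,False) = 0"
     "tavin_W (a,b,c) 2 (False,True) = a+b+c"
     "tavin_W (a,b,c) 2 (False,False) = 0"
     "tavin_W (a,b,c) 3 (True,True) = 0"
     "tavin_W (a,b,c) 3 (True,False) = 0"
     "tavin_W (a,b,c) 3 (False,True) = 0"
     "tavin_W (a,b,c) 3 (False,False) = a+b+c"
    using assms by (simp_all add: tavin_W_def tavin_pi_def tavin_I_def)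
  have 1: "measure_pmf.expectation (tavin_dist p1 p2) (tavin_W (a,b,c) 1) = (a+b+c)*(p1*p2*(a/(a+b)) + p1*(1-p2))"
    unfolding e w by (simp add: algebra_simps)
  have 2: "measure_pmf.expectation (tavin_dist p1 p2) (tavin_W (a,b,c) 2) = (a+b+c)*(p1*p2*(b/(a+b)) + (1-p1)*p2)"
    unfolding e w by (simp add: algebra_simps)
  have 3: "measure_pmf.expectation (tavin_dist p1 p2) (tavin_W (a,b,c) 3) = (1-p1)*(1-p2)*(a+b+c)"
    unfolding e w by (simp add: algebra_simps)
  show ?thesis unfolding tavin_fair_def by (simp del: One_nat_def add: 1 2 3 tavin_pi_def)
qed

lemma alg:
  fixes p1 p2 q1 q2 a b c :: real
  assumes "0 < p1" "p1 < 1" "0 < p2" "p2 < 1" "0 < a" "0 < b" "0 < c"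
    and q1: "q1 = 1 - p1" and q2: "q2 = 1 - p2"
  shows "((a+b+c)*(p1*p2*(a/(a+b)) + p1*(1-p2)) = a \<and>
      (a+b+c)*(p1*p2*(b/(a+b)) + (1-p1)*p2) = b \<and>
      (1-p1)*(1-p2)*(a+b+c) = c) \<longleftrightarrow>
     (a = c * (p1 / q1) * ((1 - q1 * q2) / (p1 * q2 + p2 * q1)) \<and>
      b = c * (p2 / q2) * ((1 - q1 * q2) / (p1 * q2 + p2 * q1)))"
proof -
  define S where "S = a+b+c"
  define r where "r = 1 - q1*q2"
  define D where "D = p1 * q2 + p2 * q1"
  have q1p: "q1 > 0" "q1 < 1" and q2p: "q2 > 0" "q2 < 1" using assms by auto
  have Dp: "D > 0" unfolding D_def using assms q1p q2p by (simp add: add_pos_pos)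
  have rD: "r = D + p1*p2" unfolding r_def D_def q1 q2 by (simp add: algebra_simps)
  have rp: "r > 0" using rD Dp assms by (simp add: add_pos_pos)
  have ab: "a + b > 0" using assms by simp
  show ?thesis
  proof
    assume h: "(a+b+c)*(p1*p2*(a/(a+b)) + p1*(1-p2)) = a \<and>
      (a+b+c)*(p1*p2*(b/(a+b)) + (1-p1)*p2) = b \<and>
      (1-p1)*(1-p2)*(a+b+c) = c"
    have E3: "q1*q2*S = c" using h unfolding S_def q1 q2 by simp
    have E1: "S*(p1*p2*(a/(a+b)) + p1*q2) = a" using h unfolding S_def q2 by simp
    have E2: "S*(p1*p2*(b/(a+b)) + q1*p2) = b" using h unfolding S_def q1 by simp
    have Sab: "a + b = S * r" using E3 unfolding S_def r_def by (simp add: algebra_simps)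
    have Sp: "S > 0" unfolding S_def using assms by simp
    have a1: "a * D = S * p1 * q2 * r"
    proof -
      have "a = S*p1*p2*a/(S*r) + S*p1*q2" using E1 Sab by (simp add: algebra_simps)
      also have "\<dots> = p1*p2*a/r + S*p1*q2" using Sp by simp
      finally have "a * r = p1*p2*a + S*p1*q2*r" using rp by (simp add: field_simps)
      thus ?thesis using rD by (simp add: algebra_simps)
    qed
    have b1: "b * D = S * p2 * q1 * r"
    proof -
      have "b = S*p1*p2*b/(S*r) + S*q1*p2" using E2 Sab by (simp add: algebra_simps)
      also have "\<dots> = p1*p2*b/r + S*q1*p2" using Sp by simp
      finally have "b * r = p1*p2*b + S*q1*p2*r" using rp by (simp add: field_simps)
      thus ?thesis using rD by (simp add: algebra_simps)
    qed
    have SS: "S = c / (q1*q2)" using E3 q1p q2p by (simp add: field_simps)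
    show "a = c * (p1 / q1) * ((1 - q1 * q2) / (p1 * q2 + p2 * q1)) \<and>
      b = c * (p2 / q2) * ((1 - q1 * q2) / (p1 * q2 + p2 * q1))"
      unfolding r_def[symmetric] D_def[symmetric]
      using a1 b1 SS Dp q1p q2p by (simp add: field_simps)
  next
    assume h: "a = c * (p1 / q1) * ((1 - q1 * q2) / (p1 * q2 + p2 * q1)) \<and>
      b = c * (p2 / q2) * ((1 - q1 * q2) / (p1 * q2 + p2 * q1))"
    define T where "T = c/(q1*q2)"
    have a1: "a = T*p1*q2*r/D" using h q1p q2p unfolding T_def r_def D_def by (simp add: field_simps)
    have b1: "b = T*p2*q1*r/D" using h q1p q2p unfolding T_def r_def D_def by (simp add: field_simps)
    have "a + b = (T*p1*q2*r + T*p2*q1*r)/D" unfolding a1 b1 by (simp add: add_divide_distrib)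
    also have "\<dots> = T*r*D/D" unfolding D_def by (simp add: algebra_simps)
    finally have abT: "a + b = T*r" using Dp by simp
    have ST: "S = T" unfolding S_def using abT q1p q2p unfolding T_def r_def by (simp add: field_simps)
    have Tp: "T > 0" unfolding T_def using q1p q2p assms by simp
    have E3: "q1*q2*S = c" using ST q1p q2p unfolding T_def by simp
    have E1: "S*(p1*p2*(a/(a+b)) + p1*q2) = a"
    proof -
      have fr: "a/(a+b) = p1*q2/D" using Tp rp Dp by (subst abT, subst a1, simp add: field_simps)
      have "S*(p1*p2*(a/(a+b)) + p1*q2) = T*(p1*p2*(p1*q2/D) + p1*q2)" by (simp only: ST fr)
      also have "\<dots> = T*p1*q2*r/D" using rD Dp by (simp add: field_simps)
      finally show ?thesis using a1 by simp
    qed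
    have E2: "S*(p1*p2*(b/(a+b)) + q1*p2) = b"
    proof -
      have fr: "b/(a+b) = p2*q1/D" using Tp rp Dp by (subst abT, subst b1, simp add: field_simps)
      have "S*(p1*p2*(b/(a+b)) + q1*p2) = T*(p1*p2*(p2*q1/D) + q1*p2)" by (simp only: ST fr)
      also have "\<dots> = T*p2*q1*r/D" using rD Dp by (simp add: field_simps)
      finally show ?thesis using b1 by simp
    qed
    show "(a+b+c)*(p1*p2*(a/(a+b)) + p1*(1-p2)) = a \<and>
      (a+b+c)*(p1*p2*(b/(a+b)) + (1-p1)*p2) = b \<and>
      (1-p1)*(1-p2)*(a+b+c) = c"
      using E1 E2 E3 unfolding S_def q1 q2 by simp
  qed
qed

theorem mainTheorem9:
  fixes p1 p2 :: real
  assumes "0 < p1" "p1 < 1" "0 < p2" "p2 < 1"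
  defines "q1 \<equiv> 1 - p1" and "q2 \<equiv> 1 - p2"
  shows "(\<forall>\<pi>1 \<pi>2 \<pi>3 :: real. 0 < \<pi>1 \<longrightarrow> 0 < \<pi>2 \<longrightarrow> 0 < \<pi>3 \<longrightarrow>
            (tavin_fair p1 p2 (\<pi>1, \<pi>2, \<pi>3) \<longleftrightarrow>
              (\<pi>1 = \<pi>3 * (p1 / q1) * ((1 - q1 * q2) / (p1 * q2 + p2 * q1)) \<and>
               \<pi>2 = \<pi>3 * (p2 / q2) * ((1 - q1 * q2) / (p1 * q2 + p2 * q1)))))
         \<and> {(\<pi>1, \<pi>2, \<pi>3) | \<pi>1 \<pi>2 \<pi>3 :: real. 0 < \<pi>1 \<and> 0 < \<pi>2 \<and> 0 < \<pi>3 \<and>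
                                     tavin_fair p1 p2 (\<pi>1, \<pi>2, \<pi>3)}
           = {(\<pi>3 * (p1 / q1) * ((1 - q1 * q2) / (p1 * q2 + p2 * q1)),
               \<pi>3 * (p2 / q2) * ((1 - q1 * q2) / (p1 * q2 + p2 * q1)), \<pi>3) | \<pi>3 :: real. 0 < \<pi>3}"
proof -
  have key: "\<And>a b c. 0 < a \<Longrightarrow> 0 < b \<Longrightarrow> 0 < c \<Longrightarrow>
     tavin_fair p1 p2 (a,b,c) \<longleftrightarrow>
     (a = c * (p1 / q1) * ((1 - q1 * q2) / (p1 * q2 + p2 * q1)) \<and>
      b = c * (p2 / q2) * ((1 - q1 * q2) / (p1 * q2 + p2 * q1)))"
  proof -
    fix a b c :: real assume h: "0 < a" "0 < b" "0 < c"
    show "tavin_fair p1 p2 (a,b,c) \<longleftrightarrow>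
     (a = c * (p1 / q1) * ((1 - q1 * q2) / (p1 * q2 + p2 * q1)) \<and>
      b = c * (p2 / q2) * ((1 - q1 * q2) / (p1 * q2 + p2 * q1)))"
      by (simp only: fair_iff[OF assms(1-4) h] alg[OF assms(1-4) h q1_def[THEN meta_eq_to_obj_eq] q2_def[THEN meta_eq_to_obj_eq]])
  qed
  have q1p: "q1 > 0" and q2p: "q2 > 0" using assms(1-4) q1_def q2_def by auto
  have Dp: "p1 * q2 + p2 * q1 > 0" using assms(1-4) q1p q2p by (simp add: add_pos_pos)
  have rp: "1 - q1 * q2 > 0" using assms(1-4) q1_def q2_def
  proof -
    have "q1 * q2 < 1 * 1" using assms(1-4) q1_def q2_def by (intro mult_strict_mono) auto
    thus ?thesis by simp
  qed
  have pos: "\<And>c. 0 < c \<Longrightarrow> 0 < c * (p1 / q1) * ((1 - q1 * q2) / (p1 * q2 + p2 * q1)) \<and>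
      0 < c * (p2 / q2) * ((1 - q1 * q2) / (p1 * q2 + p2 * q1))"
    using q1p q2p Dp rp assms(1-4) by simp
  show ?thesis
  proof
    show "\<forall>\<pi>1 \<pi>2 \<pi>3 :: real. 0 < \<pi>1 \<longrightarrow> 0 < \<pi>2 \<longrightarrow> 0 < \<pi>3 \<longrightarrow>
            (tavin_fair p1 p2 (\<pi>1, \<pi>2, \<pi>3) \<longleftrightarrow>
              (\<pi>1 = \<pi>3 * (p1 / q1) * ((1 - q1 * q2) / (p1 * q2 + p2 * q1)) \<and>
               \<pi>2 = \<pi>3 * (p2 / q2) * ((1 - q1 * q2) / (p1 * q2 + p2 * q1))))"
      using key by blast
  next
    show "{(\<pi>1, \<pi>2, \<pi>3) | \<pi>1 \<pi>2 \<pi>3 :: real. 0 < \<pi>1 \<and> 0 < \<pi>2 \<and> 0 < \<pi>3 \<and>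
                                     tavin_fair p1 p2 (\<pi>1, \<pi>2, \<pi>3)}
           = {(\<pi>3 * (p1 / q1) * ((1 - q1 * q2) / (p1 * q2 + p2 * q1)),
               \<pi>3 * (p2 / q2) * ((1 - q1 * q2) / (p1 * q2 + p2 * q1)), \<pi>3) | \<pi>3 :: real. 0 < \<pi>3}"
    proof (intro equalityI subsetI)
      fix x assume "x \<in> {(\<pi>1, \<pi>2, \<pi>3) | \<pi>1 \<pi>2 \<pi>3 :: real. 0 < \<pi>1 \<and> 0 < \<pi>2 \<and> 0 < \<pi>3 \<and>
                                     tavin_fair p1 p2 (\<pi>1, \<pi>2, \<pi>3)}"
      then obtain a b c where "x = (a,b,c)" "0 < a" "0 < b" "0 < c" "tavin_fair p1 p2 (a,b,c)" by blast
      then show "x \<in> {(\<pi>3 * (p1 / q1) * ((1 - q1 * q2) / (p1 * q2 + p2 * q1)),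
               \<pi>3 * (p2 / q2) * ((1 - q1 * q2) / (p1 * q2 + p2 * q1)), \<pi>3) | \<pi>3 :: real. 0 < \<pi>3}"
        using key by blast
    next
      fix x assume "x \<in> {(\<pi>3 * (p1 / q1) * ((1 - q1 * q2) / (p1 * q2 + p2 * q1)),
               \<pi>3 * (p2 / q2) * ((1 - q1 * q2) / (p1 * q2 + p2 * q1)), \<pi>3) | \<pi>3 :: real. 0 < \<pi>3}"
      then obtain c where c: "0 < c" "x = (c * (p1 / q1) * ((1 - q1 * q2) / (p1 * q2 + p2 * q1)),
               c * (p2 / q2) * ((1 - q1 * q2) / (p1 * q2 + p2 * q1)), c)" by blast
      then show "x \<in> {(\<pi>1, \<pi>2, \<pi>3) | \<pi>1 \<pi>2 \<pi>3 :: real. 0 < \<pi>1 \<and> 0 < \<pi>2 \<and> 0 < \<pi>3 \<and>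
                                     tavin_fair p1 p2 (\<pi>1, \<pi>2, \<pi>3)}"
        using key[of _ _ c] pos[OF c(1)] by blast
    qed
  qed
qed

end
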